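(* Let $d\ge1$, $\lambda>0$, $\delta>0$, and let $f:\mathbb{R}^d\to\mathbb{R}$ satisfy: (A1) $f$ is continuous and has at least one minimizer; (A2) $\int_{\mathbb{R}^d}\exp(-f(y)/\delta)\,dy<+\infty$. Let $(x^k)_{k\in\mathbb{N}}$ be generated by ZOPPA. Then (i) $H_{\lambda,\delta}(x^{k+1})\le H_{\lambda,\delta}(x^k)-\frac1{2\lambda\delta}\|x^{k+1}-x^k\|^2$ for all $k\ge0$, and (ii) $\|x^{k+1}-x^k\|\to0$ as $k\to\infty$.
   Context: The zeroth-order proximal operator is $T:=\operatorname{zprox}^\delta_{\lambda,f}$, $T(x)=\dfrac{\mathbb{E}_{y\sim\mathcal N(x,\lambda\delta I)}[y\exp(-f(y)/\delta)]}{\mathbb{E}_{y\sim\mathcal N(x,\lambda\delta I)}[\exp(-f(y)/\delta)]}$; under (A1)–(A2) it is a bijection of $\mathbb{R}^d$. The soft Moreau envelope is $f^{\lambda,\delta}(x)=-\delta\log\mathbb{E}_{y\sim\mathcal N(x,\lambda\delta I)}[\exp(-f(y)/\delta)]$. The function $H_{\lambda,\delta}:\mathbb{R}^d\to\mathbb{R}$ is $H_{\lambda,\delta}(x)=-\frac{1}{2\lambda\delta}\|T^{-1}(x)-x\|^2+\frac1\delta f^{\lambda,\delta}(T^{-1}(x))$. ZOPPA: given $x^0\in\mathbb{R}^d$, iterate $x^{k+1}=T(x^k)$. *)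

theory Defs
  imports "HOL-Analysis.Analysis"
begin

definition gauss_density :: "real \<Rightarrow> real \<Rightarrow> 'a::euclidean_space \<Rightarrow> 'a \<Rightarrow> real" where
  "gauss_density lam del x y =
     (2 * pi * lam * del) powr (- real DIM('a) / 2) * exp (- (norm (y - x))\<^sup>2 / (2 * lam * del))"

definition zprox :: "real \<Rightarrow> real \<Rightarrow> ('a::euclidean_space \<Rightarrow> real) \<Rightarrow> 'a \<Rightarrow> 'a" where
  "zprox lam del f x =
     (\<integral>y. (gauss_density lam del x y * exp (- f y / del)) *\<^sub>R y \<partial>lborel) /\<^sub>R
     (\<integral>y. gauss_density lam del x y * exp (- f y / del) \<partial>lborel)"

definition soft_moreau :: "real \<Rightarrow> real \<Rightarrow> ('a::euclidean_space \<Rightarrow> real) \<Rightarrow> 'a \<Rightarrow> real" where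
  "soft_moreau lam del f x =
     - del * ln (\<integral>y. gauss_density lam del x y * exp (- f y / del) \<partial>lborel)"

text \<open>The Lyapunov function H_{lam,del}; T^{-1} is the inverse of the bijection zprox.\<close>
definition H_fun :: "real \<Rightarrow> real \<Rightarrow> ('a::euclidean_space \<Rightarrow> real) \<Rightarrow> 'a \<Rightarrow> real" where
  "H_fun lam del f x =
     (let z = inv (zprox lam del f) x in
      - (1 / (2 * lam * del)) * (norm (z - x))\<^sup>2 + (1 / del) * soft_moreau lam del f z)"

end

theory Submission
  imports Defs
begin

locale zp =
  fixes f :: "'a::euclidean_space \<Rightarrow> real" and lam del :: real
  assumes lam_pos: "lam > 0" and del_pos: "del > 0"
    and contf: "continuous_on UNIV f"
    and fmin: "\<exists>x0. \<forall>y. f x0 \<le> f y"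
    and A2: "(\<integral>\<^sup>+ y. ennreal (exp (- f y / del)) \<partial>lborel) < \<infinity>"
begin

definition "s = lam * del"
definition "K = (2 * pi * lam * del) powr (- real DIM('a) / 2)"
definition "pp y = exp (- f y / del)"
definition "Z z = (\<integral>y. gauss_density lam del z y * exp (- f y / del) \<partial>lborel)"
definition "Y z = (\<integral>y. (gauss_density lam del z y * exp (- f y / del)) *\<^sub>R y \<partial>lborel)"

lemma s_pos: "s > 0" using lam_pos del_pos by (simp add: s_def)
lemma K_pos: "K > 0" using lam_pos del_pos by (simp add: K_def)

lemma gd_eq: "gauss_density lam del z y = K * exp (- (norm (y - z))\<^sup>2 / (2 * s))" for z y :: 'a
  by (simp add: gauss_density_def K_def s_def mult.assoc)

lemma f_meas[measurable]: "f \<in> borel_measurable borel"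
  using contf by (rule borel_measurable_continuous_onI)

lemma f_meas'[measurable]: "f \<in> borel_measurable lborel"
  using f_meas by simp



lemma pp_pos: "pp y > 0" by (simp add: pp_def)

lemma pp_bound: "\<exists>M. \<forall>y. pp y \<le> M"
proof -
  obtain x0 where x0: "\<forall>y. f x0 \<le> f y" using fmin by blast
  have "pp y \<le> exp (- f x0 / del)" for y
    unfolding pp_def using x0 del_pos by (simp add: divide_right_mono)
  then show ?thesis by blast
qed

lemma pp_int: "integrable lborel (\<lambda>y. exp (- f y / del))"
  by (rule integrableI_bounded) (use A2 in auto)

lemma int_bounded:
  fixes h :: "'a \<Rightarrow> real"
  assumes hm: "h \<in> borel_measurable lborel" and hb: "\<And>y. \<bar>h y\<bar> \<le> C"
  shows "integrable lborel (\<lambda>y. h y * exp (- f y / del))"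
proof (rule Bochner_Integration.integrable_bound[OF integrable_mult_right[OF pp_int, of C]])
  show "(\<lambda>y. h y * exp (- f y / del)) \<in> borel_measurable lborel" using hm by measurable
  show "AE y in lborel. norm (h y * exp (- f y / del)) \<le> norm (C * exp (- f y / del))"
  proof (rule AE_I2)
    fix y
    have "C \<ge> 0" using hb[of y] by linarith
    then show "norm (h y * exp (- f y / del)) \<le> norm (C * exp (- f y / del))"
      using hb[of y] by (simp add: abs_mult mult_right_mono)
  qed
qed

lemma int_bounded_vec:
  fixes h :: "'a \<Rightarrow> real"
  assumes hm: "h \<in> borel_measurable lborel" and hb: "\<And>y. \<bar>h y\<bar> * norm y \<le> C"
  shows "integrable lborel (\<lambda>y. (h y * exp (- f y / del)) *\<^sub>R y)"
proof (rule Bochner_Integration.integrable_bound[OF integrable_mult_right[OF pp_int, of C]])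
  show "(\<lambda>y. (h y * exp (- f y / del)) *\<^sub>R y) \<in> borel_measurable lborel" using hm by measurable
  show "AE y in lborel. norm ((h y * exp (- f y / del)) *\<^sub>R y) \<le> norm (C * exp (- f y / del))"
  proof (rule AE_I2)
    fix y
    have "C \<ge> 0" using hb[of y] by (smt (verit) mult_nonneg_nonneg norm_ge_zero)
    then show "norm ((h y * exp (- f y / del)) *\<^sub>R y) \<le> norm (C * exp (- f y / del))"
      using hb[of y] by (simp add: abs_mult mult_right_mono mult.commute mult.left_commute)
  qed
qed

lemma gauss_quad: "exp (- r\<^sup>2 / (2 * s)) * exp (c * r) \<le> exp (c\<^sup>2 * s / 2)"
proof -
  have "- r\<^sup>2 / (2 * s) + c * r \<le> c\<^sup>2 * s / 2"
  proof -
    have "0 \<le> (r - c * s)\<^sup>2 / (2 * s)" using s_pos by simp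
    also have "(r - c * s)\<^sup>2 / (2 * s) = c\<^sup>2 * s / 2 - (- r\<^sup>2 / (2 * s) + c * r)"
      using s_pos by (simp add: field_simps power2_eq_square)
    finally show ?thesis by simp
  qed
  then show ?thesis by (simp add: exp_add[symmetric])
qed

lemma gd_nonneg: "gauss_density lam del z y \<ge> 0" for z y :: 'a
  using K_pos by (simp add: gd_eq)

lemma gd_le: "gauss_density lam del z y \<le> K" for z y :: 'a
  using K_pos s_pos by (simp add: gd_eq)

lemma gd_meas[measurable]: "(\<lambda>y. gauss_density lam del z y) \<in> borel_measurable lborel" for z :: 'a
  unfolding gd_eq by measurable

lemma gd_norm_le: "gauss_density lam del z y * norm y \<le> K * (exp (s / 2) + norm z)" for z y :: 'a
proof -
  have "norm y \<le> norm (y - z) + norm z" by (metis diff_add_cancel norm_triangle_ineq)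
  also have "norm (y - z) \<le> exp (norm (y - z))" by (meson exp_ge_add_one_self order_trans le_add_same_cancel2 zero_le_one)
  finally have ny: "norm y \<le> exp (norm (y - z)) + norm z" by simp
  have e1: "exp (- (norm (y - z))\<^sup>2 / (2 * s)) \<le> 1" using s_pos by simp
  have "gauss_density lam del z y * norm y \<le> K * exp (- (norm (y - z))\<^sup>2 / (2 * s)) * (exp (norm (y - z)) + norm z)"
    unfolding gd_eq using ny K_pos by (intro mult_left_mono) auto
  also have "\<dots> = K * (exp (- (norm (y - z))\<^sup>2 / (2 * s)) * exp (1 * norm (y - z)) + exp (- (norm (y - z))\<^sup>2 / (2 * s)) * norm z)"
    by (simp add: algebra_simps)
  also have "\<dots> \<le> K * (exp (1\<^sup>2 * s / 2) + 1 * norm z)"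
    using K_pos gauss_quad[of "norm (y - z)" 1] e1
    by (intro mult_left_mono add_mono mult_right_mono) auto
  finally show ?thesis by simp
qed

lemma Z_int: "integrable lborel (\<lambda>y. gauss_density lam del z y * exp (- f y / del))"
  by (rule int_bounded[where C = K]) (use gd_nonneg gd_le in auto)

lemma Y_int: "integrable lborel (\<lambda>y. (gauss_density lam del z y * exp (- f y / del)) *\<^sub>R y)"
  by (rule int_bounded_vec[where C = "K * (exp (s / 2) + norm z)"]) (use gd_nonneg gd_norm_le in auto)


lemma int_pos:
  fixes h :: "'a \<Rightarrow> real"
  assumes hi: "integrable lborel h" and hp: "\<And>y. h y > 0"
  shows "integral\<^sup>L lborel h > 0"
proof -
  have nn: "integral\<^sup>L lborel h \<ge> 0"
    by (rule integral_nonneg_AE) (use hp less_imp_le in auto)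
  moreover have "integral\<^sup>L lborel h \<noteq> 0"
  proof
    assume "integral\<^sup>L lborel h = 0"
    then have "AE y in lborel. h y = 0"
      using integral_nonneg_eq_0_iff_AE[OF hi] hp less_imp_le by auto
    then have "AE (y::'a) in lborel. False"
      by (rule eventually_mono) (use hp in \<open>metis less_irrefl\<close>)
    then have "ae_filter (lborel::'a measure) = bot" by (simp add: eventually_False)
    then have e0: "emeasure lborel (UNIV :: 'a set) = 0" using ae_filter_eq_bot_iff[of "lborel::'a measure"] by simp
    have "emeasure lborel (cball (0::'a) 1) \<le> emeasure lborel (UNIV :: 'a set)"
      by (rule emeasure_mono) auto
    moreover have "emeasure lborel (cball (0::'a) 1) > 0"
      by (simp add: emeasure_cball)
    ultimately show False using e0 by simp
  qed
  ultimately show ?thesis by simp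
qed

lemma Z_pos: "Z z > 0"
  unfolding Z_def
  by (rule int_pos[OF Z_int]) (simp add: gd_eq K_pos)

lemma Z_le: "Z z \<le> K * integral\<^sup>L lborel (\<lambda>y. exp (- f y / del))"
proof -
  have "Z z \<le> integral\<^sup>L lborel (\<lambda>y. K * exp (- f y / del))"
    unfolding Z_def
    by (rule integral_mono[OF Z_int]) (use pp_int gd_le in \<open>auto intro: mult_right_mono\<close>)
  then show ?thesis by simp
qed

lemma T_eq: "zprox lam del f z = Y z /\<^sub>R Z z"
  by (simp add: zprox_def Y_def Z_def)

lemma lin_int: "integrable lborel (\<lambda>y. gauss_density lam del z y * exp (- f y / del) * (y \<bullet> a))"
proof -
  have "integrable lborel (\<lambda>y. (gauss_density lam del z y * (y \<bullet> a)) * exp (- f y / del))"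
  proof (rule int_bounded[where C = "K * (exp (s / 2) + norm z) * norm a"])
    show "(\<lambda>y. gauss_density lam del z y * (y \<bullet> a)) \<in> borel_measurable lborel" by measurable
    fix y
    have "\<bar>gauss_density lam del z y * (y \<bullet> a)\<bar> = gauss_density lam del z y * \<bar>y \<bullet> a\<bar>"
      using gd_nonneg by (simp add: abs_mult)
    also have "\<dots> \<le> gauss_density lam del z y * (norm y * norm a)"
      using gd_nonneg by (intro mult_left_mono Cauchy_Schwarz_ineq2) auto
    also have "\<dots> = (gauss_density lam del z y * norm y) * norm a" by simp
    also have "\<dots> \<le> K * (exp (s / 2) + norm z) * norm a"
      by (intro mult_right_mono gd_norm_le) auto
    finally show "\<bar>gauss_density lam del z y * (y \<bullet> a)\<bar> \<le> K * (exp (s / 2) + norm z) * norm a" .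
  qed
  then show ?thesis by (simp add: ac_simps)
qed

lemma Y_inner: "Y z \<bullet> a = (\<integral>y. gauss_density lam del z y * exp (- f y / del) * (y \<bullet> a) \<partial>lborel)"
proof -
  have "(\<integral>y. ((gauss_density lam del z y * exp (- f y / del)) *\<^sub>R y) \<bullet> a \<partial>lborel) = Y z \<bullet> a"
    unfolding Y_def
    using integral_bounded_linear[OF bounded_linear_inner_left[of a] Y_int[of z]] by simp
  then show ?thesis by simp
qed

lemma T_inner: "Y z \<bullet> a = Z z * (zprox lam del f z \<bullet> a)"
  using Z_pos[of z] by (simp add: T_eq)

lemma key:
  "Z w \<ge> Z z * exp ((w - z) \<bullet> (zprox lam del f z - z) / s - (norm (w - z))\<^sup>2 / (2 * s))"
proof -
  define a where "a = w - z"
  define c where "c = a \<bullet> (zprox lam del f z - z) / s"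
  define e0 where "e0 = exp (c - (norm a)\<^sup>2 / (2 * s))"
  let ?G = "\<lambda>y. gauss_density lam del z y * exp (- f y / del)"
  have pw: "gauss_density lam del w y = gauss_density lam del z y * exp ((y - z) \<bullet> a / s - (norm a)\<^sup>2 / (2 * s))" for y
  proof -
    have n: "(norm (y - w))\<^sup>2 = (norm (y - z))\<^sup>2 - 2 * ((y - z) \<bullet> a) + (norm a)\<^sup>2"
      unfolding a_def power2_norm_eq_inner by (simp add: algebra_simps inner_commute)
    have ee: "- (norm (y - w))\<^sup>2 / (2 * s) = - (norm (y - z))\<^sup>2 / (2 * s) + ((y - z) \<bullet> a / s - (norm a)\<^sup>2 / (2 * s))"
      unfolding n using s_pos by (simp add: field_simps)
    show ?thesis unfolding gd_eq by (simp only: ee exp_add mult.assoc)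
  qed
  have pwi: "?G y * e0 * (1 + (y - z) \<bullet> a / s - c) \<le> gauss_density lam del w y * exp (- f y / del)" for y
  proof -
    define u where "u = (y - z) \<bullet> a / s"
    have "exp c * (1 + u - c) \<le> exp c * exp (u - c)"
    proof (intro mult_left_mono)
      show "1 + u - c \<le> exp (u - c)" using exp_ge_add_one_self[of "u - c"] by linarith
    qed simp
    also have "\<dots> = exp u" by (simp add: exp_diff)
    finally have eu: "exp c * (1 + u - c) \<le> exp u" .
    have e0': "e0 = exp (- (norm a)\<^sup>2 / (2 * s)) * exp c"
      unfolding e0_def by (simp add: exp_add[symmetric])
    have eu': "exp (u - (norm a)\<^sup>2 / (2 * s)) = exp (- (norm a)\<^sup>2 / (2 * s)) * exp u"
      by (simp add: exp_add[symmetric])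
    have "?G y * e0 * (1 + u - c) = ?G y * exp (- (norm a)\<^sup>2 / (2 * s)) * (exp c * (1 + u - c))"
      unfolding e0' by (simp only: mult_ac)
    also have "\<dots> \<le> ?G y * exp (- (norm a)\<^sup>2 / (2 * s)) * exp u"
      using eu gd_nonneg by (intro mult_left_mono) auto
    also have "\<dots> = gauss_density lam del w y * exp (- f y / del)"
      unfolding pw u_def[symmetric] eu' by (simp only: mult_ac)
    finally show ?thesis unfolding u_def .
  qed
  have lin: "(\<lambda>y. ?G y * e0 * (1 + (y - z) \<bullet> a / s - c)) = (\<lambda>y. (e0 * (1 - c - (z \<bullet> a) / s)) * ?G y + (e0 / s) * (?G y * (y \<bullet> a)))"
    using s_pos by (auto simp: fun_eq_iff inner_diff_left field_simps)
  have int1: "integrable lborel (\<lambda>y. ?G y * e0 * (1 + (y - z) \<bullet> a / s - c))"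
    unfolding lin using Z_int lin_int by auto
  have "(\<integral>y. ?G y * e0 * (1 + (y - z) \<bullet> a / s - c) \<partial>lborel) = (e0 * (1 - c - (z \<bullet> a) / s)) * Z z + (e0 / s) * (Y z \<bullet> a)"
    unfolding lin Y_inner Z_def using Z_int lin_int by simp
  also have "\<dots> = e0 * Z z"
    unfolding T_inner c_def using s_pos by (simp add: field_simps inner_diff_right inner_commute)
  finally have ieq: "(\<integral>y. ?G y * e0 * (1 + (y - z) \<bullet> a / s - c) \<partial>lborel) = e0 * Z z" .
  have "e0 * Z z \<le> Z w"
    unfolding ieq[symmetric] Z_def[of w]
    by (rule integral_mono[OF int1 Z_int pwi])
  then show ?thesis unfolding e0_def c_def a_def by (simp add: mult.commute inner_commute)
qed

end

context zp begin

definition "hh z x = - (1 / (2 * lam * del)) * (norm (z - x))\<^sup>2 + (1 / del) * soft_moreau lam del f z"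

lemma hh_eq: "hh z x = - (norm (z - x))\<^sup>2 / (2 * s) - ln (Z z)"
proof -
  have "(1 / del) * soft_moreau lam del f z = - ln (Z z)"
    unfolding soft_moreau_def Z_def using del_pos by simp
  moreover have "- (1 / (2 * lam * del)) * (norm (z - x))\<^sup>2 = - (norm (z - x))\<^sup>2 / (2 * s)"
    by (simp add: s_def mult.assoc)
  ultimately show ?thesis unfolding hh_def by simp
qed

lemma H_eq: "H_fun lam del f x = hh (inv (zprox lam del f) x) x"
  by (simp add: H_fun_def hh_def Let_def)

lemma hh_max:
  assumes "zprox lam del f z = x"
  shows "hh w x \<le> hh z x"
proof -
  define A where "A = (w - z) \<bullet> (x - z)"
  have k: "Z z * exp (A / s - (norm (w - z))\<^sup>2 / (2 * s)) \<le> Z w"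
    using key[of z w] assms by (simp add: A_def)
  have "ln (Z z * exp (A / s - (norm (w - z))\<^sup>2 / (2 * s))) \<le> ln (Z w)"
    using k Z_pos[of z] Z_pos[of w] by (subst ln_le_cancel_iff) auto
  then have l: "ln (Z z) + (A / s - (norm (w - z))\<^sup>2 / (2 * s)) \<le> ln (Z w)"
    using Z_pos[of z] by (simp add: ln_mult)
  have n: "(norm (w - x))\<^sup>2 = (norm (w - z))\<^sup>2 - 2 * A + (norm (x - z))\<^sup>2"
    unfolding power2_norm_eq_inner A_def by (simp add: algebra_simps inner_commute)
  have "- (norm (w - x))\<^sup>2 / (2 * s) = - (norm (w - z))\<^sup>2 / (2 * s) + A / s - (norm (z - x))\<^sup>2 / (2 * s)"
    unfolding n using s_pos by (simp add: field_simps norm_minus_commute)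
  then show ?thesis unfolding hh_eq using l by linarith
qed

lemma step:
  assumes "x \<in> range (zprox lam del f)"
  shows "H_fun lam del f (zprox lam del f x) \<le> H_fun lam del f x - (1 / (2 * lam * del)) * (norm (zprox lam del f x - x))\<^sup>2"
proof -
  let ?T = "zprox lam del f"
  have "H_fun lam del f (?T x) \<le> hh x (?T x)"
    unfolding H_eq by (rule hh_max) simp
  moreover have "hh x x \<le> H_fun lam del f x"
    unfolding H_eq by (rule hh_max) (use assms in \<open>simp add: f_inv_into_f\<close>)
  moreover have "hh x (?T x) = hh x x - (1 / (2 * lam * del)) * (norm (?T x - x))\<^sup>2"
    unfolding hh_eq by (simp add: s_def norm_minus_commute mult.assoc)
  ultimately show ?thesis by linarith
qed

lemma H_lower:
  assumes "x \<in> range (zprox lam del f)"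
  shows "H_fun lam del f x \<ge> - ln (K * integral\<^sup>L lborel (\<lambda>y. exp (- f y / del)))"
proof -
  have "hh x x \<le> H_fun lam del f x"
    unfolding H_eq by (rule hh_max) (use assms in \<open>simp add: f_inv_into_f\<close>)
  moreover have "ln (Z x) \<le> ln (K * integral\<^sup>L lborel (\<lambda>y. exp (- f y / del)))"
    using Z_pos[of x] Z_le[of x] by (subst ln_le_cancel_iff) auto
  ultimately show ?thesis unfolding hh_eq by simp
qed


definition "Rf x y = K * exp (- f y / del) * exp (((norm x)\<^sup>2 - (norm y)\<^sup>2) / (2 * s))"

lemma Rf_pos: "Rf x y > 0" using K_pos by (simp add: Rf_def)

lemma ident:
  "gauss_density lam del w y * exp (- f y / del) * exp ((norm (w - x))\<^sup>2 / (2 * s)) = Rf x y * exp (w \<bullet> (y - x) / s)"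
proof -
  have n1: "(norm (y - w))\<^sup>2 = (norm y)\<^sup>2 - 2 * (w \<bullet> y) + (norm w)\<^sup>2"
    unfolding power2_norm_eq_inner by (simp add: algebra_simps inner_commute)
  have n2: "(norm (w - x))\<^sup>2 = (norm w)\<^sup>2 - 2 * (w \<bullet> x) + (norm x)\<^sup>2"
    unfolding power2_norm_eq_inner by (simp add: algebra_simps inner_commute)
  have e: "- (norm (y - w))\<^sup>2 / (2 * s) + (norm (w - x))\<^sup>2 / (2 * s) = ((norm x)\<^sup>2 - (norm y)\<^sup>2) / (2 * s) + w \<bullet> (y - x) / s"
    unfolding n1 n2 using s_pos by (simp add: field_simps inner_diff_right)
  have "gauss_density lam del w y * exp (- f y / del) * exp ((norm (w - x))\<^sup>2 / (2 * s))
      = K * exp (- f y / del) * exp (- (norm (y - w))\<^sup>2 / (2 * s) + (norm (w - x))\<^sup>2 / (2 * s))"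
    unfolding gd_eq exp_add by (simp only: mult_ac)
  also have "\<dots> = Rf x y * exp (w \<bullet> (y - x) / s)"
    unfolding e exp_add Rf_def by (simp only: mult_ac)
  finally show ?thesis .
qed

definition "Psi x w = Z w * exp ((norm (w - x))\<^sup>2 / (2 * s))"

lemma Psi_int: "integrable lborel (\<lambda>y. Rf x y * exp (w \<bullet> (y - x) / s))"
proof -
  have "integrable lborel (\<lambda>y. gauss_density lam del w y * exp (- f y / del) * exp ((norm (w - x))\<^sup>2 / (2 * s)))"
    using Z_int by simp
  then show ?thesis unfolding ident .
qed

lemma Psi_eq: "Psi x w = (\<integral>y. Rf x y * exp (w \<bullet> (y - x) / s) \<partial>lborel)"
proof -
  have "Psi x w = (\<integral>y. gauss_density lam del w y * exp (- f y / del) * exp ((norm (w - x))\<^sup>2 / (2 * s)) \<partial>lborel)"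
    unfolding Psi_def Z_def by simp
  then show ?thesis unfolding ident .
qed

lemma Psi_convex: "convex_on UNIV (Psi x)"
proof (rule convex_onI)
  fix t :: real and w1 w2 :: 'a
  assume t: "0 < t" "t < 1"
  have pw: "Rf x y * exp (((1 - t) *\<^sub>R w1 + t *\<^sub>R w2) \<bullet> (y - x) / s)
      \<le> (1 - t) * (Rf x y * exp (w1 \<bullet> (y - x) / s)) + t * (Rf x y * exp (w2 \<bullet> (y - x) / s))" for y
  proof -
    have "((1 - t) *\<^sub>R w1 + t *\<^sub>R w2) \<bullet> (y - x) / s = (1 - t) * (w1 \<bullet> (y - x) / s) + t * (w2 \<bullet> (y - x) / s)"
      by (simp add: inner_add_left add_divide_distrib)
    then have "exp (((1 - t) *\<^sub>R w1 + t *\<^sub>R w2) \<bullet> (y - x) / s) \<le> (1 - t) * exp (w1 \<bullet> (y - x) / s) + t * exp (w2 \<bullet> (y - x) / s)"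
      using convex_onD[OF exp_convex, of t "w1 \<bullet> (y - x) / s" "w2 \<bullet> (y - x) / s"] t by simp
    then have "Rf x y * exp (((1 - t) *\<^sub>R w1 + t *\<^sub>R w2) \<bullet> (y - x) / s) \<le> Rf x y * ((1 - t) * exp (w1 \<bullet> (y - x) / s) + t * exp (w2 \<bullet> (y - x) / s))"
      by (rule mult_left_mono) (use Rf_pos[of x y] in auto)
    then show ?thesis by (simp add: algebra_simps)
  qed
  have "Psi x ((1 - t) *\<^sub>R w1 + t *\<^sub>R w2) \<le> (\<integral>y. (1 - t) * (Rf x y * exp (w1 \<bullet> (y - x) / s)) + t * (Rf x y * exp (w2 \<bullet> (y - x) / s)) \<partial>lborel)"
    unfolding Psi_eq by (rule integral_mono[OF Psi_int _ pw]) (use Psi_int in auto)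
  also have "\<dots> = (1 - t) * Psi x w1 + t * Psi x w2"
    unfolding Psi_eq using Psi_int by simp
  finally show "Psi x ((1 - t) *\<^sub>R w1 + t *\<^sub>R w2) \<le> (1 - t) * Psi x w1 + t * Psi x w2" .
qed simp

lemma Psi_cont: "continuous_on UNIV (Psi x)"
  by (rule convex_on_continuous[OF open_UNIV Psi_convex])

lemma Psi_pos: "Psi x w > 0" using Z_pos by (simp add: Psi_def)


lemma Rf_cont: "continuous_on UNIV (Rf x)"
  unfolding Rf_def by (intro continuous_intros contf) (use del_pos s_pos in auto)

lemma coerc:
  obtains m V where "m > 0" "V > 0" "\<And>w. w \<noteq> 0 \<Longrightarrow> Psi x w \<ge> m * V * exp (norm w / (2 * s))"
proof -
  obtain ym where ym: "ym \<in> cball x 2" "\<And>y. y \<in> cball x 2 \<Longrightarrow> Rf x ym \<le> Rf x y"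
    using continuous_attains_inf[OF compact_cball _ continuous_on_subset[OF Rf_cont subset_UNIV], of x 2]
    by fastforce
  define m where "m = Rf x ym"
  have m: "m > 0" using Rf_pos by (simp add: m_def)
  define V where "V = measure lborel (ball (0::'a) (1/2))"
  have V: "V > 0" unfolding V_def by simp
  have Vc: "measure lborel (ball c (1/2)) = V" for c :: 'a
    unfolding V_def by (simp add: content_ball)
  have "Psi x w \<ge> m * V * exp (norm w / (2 * s))" if w0: "w \<noteq> 0" for w
  proof -
    define u0 where "u0 = w /\<^sub>R norm w"
    define B where "B = ball (x + u0) (1/2)"
    define C where "C = m * exp (norm w / (2 * s))"
    have C0: "C \<ge> 0" using m by (simp add: C_def)
    have inB: "w \<bullet> (y - x) \<ge> norm w / 2 \<and> y \<in> cball x 2" if yB: "y \<in> B" for y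
    proof -
      define e where "e = y - x - u0"
      have ne: "norm e < 1/2" using yB unfolding B_def e_def by (simp add: dist_norm norm_minus_commute algebra_simps)
      have wu: "w \<bullet> u0 = norm w" unfolding u0_def using w0
        by (simp add: power2_norm_eq_inner[symmetric] power2_eq_square)
      have nu: "norm u0 = 1" unfolding u0_def using w0 by simp
      have "w \<bullet> (y - x) = norm w + w \<bullet> e" unfolding e_def using wu by (simp add: inner_diff_right)
      moreover have "\<bar>w \<bullet> e\<bar> \<le> norm w * norm e" by (rule Cauchy_Schwarz_ineq2)
      moreover have "norm w * norm e \<le> norm w * (1/2)" using ne by (intro mult_left_mono) auto
      moreover have "norm (y - x) \<le> norm u0 + norm e"
        by (metis e_def diff_add_cancel add.commute norm_triangle_ineq)
      ultimately show ?thesis using nu ne by (auto simp: dist_norm norm_minus_commute)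
    qed
    have pw: "C * indicator B y \<le> Rf x y * exp (w \<bullet> (y - x) / s)" for y
    proof (cases "y \<in> B")
      case True
      then have i: "w \<bullet> (y - x) \<ge> norm w / 2" "y \<in> cball x 2" using inB by auto
      have "exp (norm w / (2 * s)) \<le> exp (w \<bullet> (y - x) / s)"
        using i(1) s_pos by (simp add: field_simps)
      moreover have "m \<le> Rf x y" using ym(2)[OF i(2)] by (simp add: m_def)
      ultimately show ?thesis using True m unfolding C_def by (simp add: mult_mono)
    next
      case False
      then show ?thesis using Rf_pos[of x y] by simp
    qed
    have Bs: "B \<in> sets lborel" unfolding B_def by simp
    have Bf: "emeasure lborel B < \<infinity>" unfolding B_def by (rule emeasure_lborel_ball_finite)
    have "(\<integral>y. C * indicator B y \<partial>lborel) \<le> Psi x w"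
      unfolding Psi_eq
      by (rule integral_mono[OF _ Psi_int pw]) (use Bs Bf in simp)
    moreover have "(\<integral>y. C * indicator B y \<partial>lborel) = C * measure lborel B"
      by simp
    moreover have "measure lborel B = V" unfolding B_def by (rule Vc)
    ultimately show ?thesis by (simp add: C_def mult_ac)
  qed
  then show ?thesis using that m V by blast
qed

lemma minimizer: "\<exists>z. \<forall>w. Psi x z \<le> Psi x w"
proof -
  obtain m V where m: "m > 0" and V: "V > 0" and c: "\<And>w. w \<noteq> 0 \<Longrightarrow> Psi x w \<ge> m * V * exp (norm w / (2 * s))"
    using coerc by blast
  define P0 where "P0 = Psi x x"
  have P0: "P0 > 0" using Psi_pos by (simp add: P0_def)
  define R0 where "R0 = 2 * s * \<bar>ln (P0 / (m * V))\<bar>"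
  define R where "R = max R0 (norm x)"
  obtain z where z: "z \<in> cball 0 R" "\<And>w. w \<in> cball 0 R \<Longrightarrow> Psi x z \<le> Psi x w"
    using continuous_attains_inf[OF compact_cball _ continuous_on_subset[OF Psi_cont subset_UNIV], of 0 R]
    by (fastforce simp: R_def)
  have xin: "x \<in> cball 0 R" by (simp add: R_def)
  have "Psi x z \<le> Psi x w" for w
  proof (cases "w \<in> cball 0 R")
    case True then show ?thesis using z by blast
  next
    case False
    then have wR: "norm w > R0" "w \<noteq> 0" using norm_ge_zero[of x] by (auto simp: R_def le_max_iff_disj)
    have "P0 / (m * V) \<le> exp \<bar>ln (P0 / (m * V))\<bar>"
      using P0 m V by (metis abs_ge_self exp_le_cancel_iff exp_ln divide_pos_pos mult_pos_pos)
    also have "\<dots> < exp (norm w / (2 * s))"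
      using wR s_pos by (simp add: R0_def field_simps)
    finally have "P0 < m * V * exp (norm w / (2 * s))"
      using m V by (simp add: field_simps)
    also have "\<dots> \<le> Psi x w" using c wR by blast
    finally show ?thesis using z(2)[OF xin] by (simp add: P0_def)
  qed
  then show ?thesis by blast
qed

lemma expq:
  fixes t u :: real
  assumes "0 < t" "t \<le> 1"
  shows "exp (- (t * u)) \<le> 1 - t * u + t\<^sup>2 * (u\<^sup>2 * exp \<bar>u\<bar>)"
proof -
  obtain xi where xi: "\<bar>xi\<bar> \<le> \<bar>- (t * u)\<bar>"
    "exp (- (t * u)) = (\<Sum>m<2. (- (t * u)) ^ m / fact m) + exp xi / fact 2 * (- (t * u)) ^ 2"
    using Maclaurin_exp_le[of "- (t * u)" 2] by blast
  have a1: "\<bar>- (t * u)\<bar> = t * \<bar>u\<bar>" using assms by (simp add: abs_mult)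
  have a2: "t * \<bar>u\<bar> \<le> \<bar>u\<bar>" using assms by (simp add: mult_left_le_one_le)
  have "\<bar>xi\<bar> \<le> \<bar>u\<bar>" using xi(1) a1 a2 by linarith
  then have "exp xi \<le> exp \<bar>u\<bar>" by simp
  then have "exp xi / 2 \<le> exp \<bar>u\<bar>" using exp_gt_zero[of xi] by linarith
  then have "exp xi / 2 * (t\<^sup>2 * u\<^sup>2) \<le> exp \<bar>u\<bar> * (t\<^sup>2 * u\<^sup>2)" by (rule mult_right_mono) simp
  then have "exp xi / 2 * (t\<^sup>2 * u\<^sup>2) \<le> t\<^sup>2 * (u\<^sup>2 * exp \<bar>u\<bar>)" by (simp add: mult_ac)
  moreover have "exp (- (t * u)) = 1 - t * u + exp xi / 2 * (t\<^sup>2 * u\<^sup>2)"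
    using xi(2) by (simp add: eval_nat_numeral power2_eq_square)
  ultimately show ?thesis by linarith
qed


lemma foc:
  assumes zmin: "\<forall>w. Psi x z \<le> Psi x w"
  shows "zprox lam del f z = x"
proof (rule ccontr)
  define v where "v = zprox lam del f z - x"
  assume "zprox lam del f z \<noteq> x"
  then have v0: "v \<noteq> 0" by (simp add: v_def)
  define D where "D = exp ((norm (z - x))\<^sup>2 / (2 * s))"
  have D0: "D > 0" by (simp add: D_def)
  let ?G = "\<lambda>y. gauss_density lam del z y * exp (- f y / del)"
  define F where "F = (\<lambda>y. Rf x y * exp (z \<bullet> (y - x) / s))"
  define u where "u = (\<lambda>y. v \<bullet> (y - x) / s)"
  have FG: "F y = ?G y * D" for y unfolding F_def D_def using ident[of z y x] by simp
  have Fpos: "F y > 0" for y unfolding F_def by (intro mult_pos_pos Rf_pos exp_gt_zero)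
  have Fint: "integrable lborel F" unfolding F_def by (rule Psi_int)
  have Fu: "F y * u y = (D / s) * (?G y * (y \<bullet> v)) - (D / s * (x \<bullet> v)) * ?G y" for y
    unfolding FG u_def using s_pos by (simp add: inner_diff_right inner_commute field_simps)
  have Fuint: "integrable lborel (\<lambda>y. F y * u y)"
    unfolding Fu using lin_int[of z v] Z_int[of z] by simp
  define A where "A = (\<integral>y. F y * u y \<partial>lborel)"
  have "A = D / s * (Y z \<bullet> v) - D / s * (x \<bullet> v) * Z z"
    unfolding A_def Fu Y_inner Z_def using lin_int[of z v] Z_int[of z] by simp
  also have "\<dots> = D / s * Z z * (v \<bullet> v)"
    unfolding T_inner by (simp add: v_def inner_diff_left inner_diff_right inner_commute algebra_simps)
  finally have A_eq: "A = D / s * Z z * (v \<bullet> v)" .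
  have Apos: "A > 0" unfolding A_eq using D0 s_pos Z_pos[of z] v0 by simp
  define h where "h = (\<lambda>y. D * gauss_density lam del z y * ((u y)\<^sup>2 * exp \<bar>u y\<bar>))"
  have Bfeq: "F y * ((u y)\<^sup>2 * exp \<bar>u y\<bar>) = h y * exp (- f y / del)" for y
    unfolding FG h_def by (simp add: mult_ac)
  define c where "c = 2 * norm v / s"
  define q where "q = norm (z - x)"
  have hb: "\<bar>h y\<bar> \<le> D * K * 2 * exp (c\<^sup>2 * s / 2) * exp (c * q)" for y
  proof -
    define r where "r = norm (y - z)"
    have "\<bar>v \<bullet> (y - x)\<bar> \<le> norm v * norm (y - x)" by (rule Cauchy_Schwarz_ineq2)
    moreover have "norm (y - x) \<le> r + q" unfolding r_def q_def
      by (metis diff_add_cancel norm_triangle_ineq add_diff_eq)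
    ultimately have "\<bar>v \<bullet> (y - x)\<bar> \<le> norm v * (r + q)"
      by (meson mult_left_mono norm_ge_zero order_trans)
    then have ub: "2 * \<bar>u y\<bar> \<le> c * r + c * q"
      unfolding u_def c_def using s_pos by (simp add: abs_div field_simps)
    have sq: "(u y)\<^sup>2 \<le> 2 * exp \<bar>u y\<bar>"
      using exp_lower_Taylor_quadratic[of "\<bar>u y\<bar>"] by simp
    have "(u y)\<^sup>2 * exp \<bar>u y\<bar> \<le> 2 * exp \<bar>u y\<bar> * exp \<bar>u y\<bar>"
      using sq by (intro mult_right_mono) auto
    also have "\<dots> = 2 * exp (2 * \<bar>u y\<bar>)" by (simp add: exp_add[symmetric])
    also have "\<dots> \<le> 2 * (exp (c * r) * exp (c * q))" using ub by (simp add: exp_add[symmetric])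
    finally have e1: "(u y)\<^sup>2 * exp \<bar>u y\<bar> \<le> 2 * (exp (c * r) * exp (c * q))" .
    have hnn: "h y \<ge> 0" unfolding h_def using D0 gd_nonneg by simp
    have "h y = D * K * (exp (- r\<^sup>2 / (2 * s)) * ((u y)\<^sup>2 * exp \<bar>u y\<bar>))"
      unfolding h_def gd_eq r_def by (simp add: mult_ac)
    also have "\<dots> \<le> D * K * (exp (- r\<^sup>2 / (2 * s)) * (2 * (exp (c * r) * exp (c * q))))"
      using e1 D0 K_pos by (intro mult_left_mono) auto
    also have "\<dots> = D * K * 2 * (exp (- r\<^sup>2 / (2 * s)) * exp (c * r)) * exp (c * q)"
      by (simp add: mult_ac)
    also have "\<dots> \<le> D * K * 2 * exp (c\<^sup>2 * s / 2) * exp (c * q)"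
      using gauss_quad[of r c] D0 K_pos by (intro mult_right_mono mult_left_mono) auto
    finally show ?thesis using hnn by simp
  qed
  have hm: "h \<in> borel_measurable lborel" unfolding h_def u_def by measurable
  have Bint: "integrable lborel (\<lambda>y. F y * ((u y)\<^sup>2 * exp \<bar>u y\<bar>))"
    unfolding Bfeq by (rule int_bounded[OF hm hb])
  define B where "B = (\<integral>y. F y * ((u y)\<^sup>2 * exp \<bar>u y\<bar>) \<partial>lborel)"
  have Bnn: "B \<ge> 0" unfolding B_def
    by (rule integral_nonneg_AE, rule AE_I2) (use Fpos in \<open>simp add: less_imp_le\<close>)
  have Psi_t: "Psi x (z - t *\<^sub>R v) \<le> Psi x z - t * A + t\<^sup>2 * B" if t: "0 < t" "t \<le> 1" for t
  proof -
    have eq: "Rf x y * exp ((z - t *\<^sub>R v) \<bullet> (y - x) / s) = F y * exp (- (t * u y))" for y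
    proof -
      have "(z - t *\<^sub>R v) \<bullet> (y - x) / s = z \<bullet> (y - x) / s + - (t * u y)"
        unfolding u_def by (simp add: inner_diff_left diff_divide_distrib)
      then show ?thesis unfolding F_def by (simp only: exp_add mult.assoc)
    qed
    have pw: "F y * exp (- (t * u y)) \<le> F y - t * (F y * u y) + t\<^sup>2 * (F y * ((u y)\<^sup>2 * exp \<bar>u y\<bar>))" for y
    proof -
      have "F y * exp (- (t * u y)) \<le> F y * (1 - t * u y + t\<^sup>2 * ((u y)\<^sup>2 * exp \<bar>u y\<bar>))"
        using expq[OF t, of "u y"] Fpos[of y] by (intro mult_left_mono) auto
      then show ?thesis by (simp add: algebra_simps)
    qed
    have "Psi x (z - t *\<^sub>R v) = (\<integral>y. F y * exp (- (t * u y)) \<partial>lborel)"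
      unfolding Psi_eq eq ..
    also have "\<dots> \<le> (\<integral>y. F y - t * (F y * u y) + t\<^sup>2 * (F y * ((u y)\<^sup>2 * exp \<bar>u y\<bar>)) \<partial>lborel)"
    proof (rule integral_mono[OF _ _ pw])
      show "integrable lborel (\<lambda>y. F y * exp (- (t * u y)))"
        using Psi_int[of x "z - t *\<^sub>R v"] unfolding eq .
      show "integrable lborel (\<lambda>y. F y - t * (F y * u y) + t\<^sup>2 * (F y * ((u y)\<^sup>2 * exp \<bar>u y\<bar>)))"
        using Fint Fuint Bint by simp
    qed
    also have "\<dots> = integral\<^sup>L lborel F - t * A + t\<^sup>2 * B"
      unfolding A_def B_def using Fint Fuint Bint by simp
    also have "integral\<^sup>L lborel F = Psi x z" unfolding Psi_eq F_def ..
    finally show ?thesis .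
  qed
  define t where "t = min 1 (A / (2 * B + 1))"
  have t0: "t > 0" using Apos Bnn by (simp add: t_def)
  have t1: "t \<le> 1" by (simp add: t_def)
  have "t * B \<le> A / (2 * B + 1) * B" using Bnn by (intro mult_right_mono) (auto simp: t_def)
  also have "\<dots> < A" using Apos Bnn by (simp add: field_simps add_pos_nonneg)
  finally have tB: "t * B < A" .
  have "t\<^sup>2 * B - t * A = t * (t * B - A)" by (simp add: power2_eq_square algebra_simps)
  also have "\<dots> < 0" using t0 tB by (simp add: mult_pos_neg)
  finally have "Psi x (z - t *\<^sub>R v) < Psi x z" using Psi_t[OF t0 t1] by linarith
  then show False using zmin by (meson not_le)
qed

lemma surjT: "x \<in> range (zprox lam del f)"
proof -
  obtain z where "\<forall>w. Psi x z \<le> Psi x w" using minimizer by blast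
  then have "zprox lam del f z = x" by (rule foc)
  then show ?thesis by (metis rangeI)
qed

end

theorem proposition2:
  fixes f :: "'a::euclidean_space \<Rightarrow> real"
    and lam del :: real
    and xs :: "nat \<Rightarrow> 'a"
  assumes lam_pos: "lam > 0" and del_pos: "del > 0"
    and A1_cont: "continuous_on UNIV f"
    and A1_min: "\<exists>x0. \<forall>y. f x0 \<le> f y"
    and A2: "(\<integral>\<^sup>+ y. ennreal (exp (- f y / del)) \<partial>lborel) < \<infinity>"
    and zoppa: "\<And>k. xs (Suc k) = zprox lam del f (xs k)"
  shows "(\<forall>k. H_fun lam del f (xs (Suc k))
              \<le> H_fun lam del f (xs k) - (1 / (2 * lam * del)) * (norm (xs (Suc k) - xs k))\<^sup>2)
         \<and> (\<lambda>k. norm (xs (Suc k) - xs k)) \<longlonglongrightarrow> 0"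
proof -
  interpret zp f lam del
    using lam_pos del_pos A1_cont A1_min A2 by unfold_locales
  define H where "H = H_fun lam del f"
  define c where "c = 1 / (2 * lam * del)"
  have c0: "c > 0" using lam_pos del_pos by (simp add: c_def)
  have st: "H (xs (Suc k)) \<le> H (xs k) - c * (norm (xs (Suc k) - xs k))\<^sup>2" for k
    unfolding H_def c_def zoppa by (rule step[OF surjT])
  define L where "L = - ln (K * integral\<^sup>L lborel (\<lambda>y. exp (- f y / del)))"
  have lo: "H (xs k) \<ge> L" for k unfolding H_def L_def by (rule H_lower[OF surjT])
  have ps: "(\<Sum>k<n. c * (norm (xs (Suc k) - xs k))\<^sup>2) \<le> H (xs 0) - H (xs n)" for n
  proof (induction n)
    case 0 then show ?case by simp
  next
    case (Suc n) then show ?case using st[of n] by simp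
  qed
  have "summable (\<lambda>k. c * (norm (xs (Suc k) - xs k))\<^sup>2)"
  proof (rule summableI_nonneg_bounded)
    show "0 \<le> c * (norm (xs (Suc k) - xs k))\<^sup>2" for k using c0 by simp
    show "(\<Sum>k<n. c * (norm (xs (Suc k) - xs k))\<^sup>2) \<le> H (xs 0) - L" for n
      using ps[of n] lo[of n] by linarith
  qed
  then have "(\<lambda>k. c * (norm (xs (Suc k) - xs k))\<^sup>2) \<longlonglongrightarrow> 0"
    by (rule summable_LIMSEQ_zero)
  then have "(\<lambda>k. (1 / c) * (c * (norm (xs (Suc k) - xs k))\<^sup>2)) \<longlonglongrightarrow> (1 / c) * 0"
    by (intro tendsto_mult tendsto_const)
  then have "(\<lambda>k. (norm (xs (Suc k) - xs k))\<^sup>2) \<longlonglongrightarrow> 0"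
    using c0 by simp
  then have "(\<lambda>k. sqrt ((norm (xs (Suc k) - xs k))\<^sup>2)) \<longlonglongrightarrow> sqrt 0"
    by (rule tendsto_real_sqrt)
  then have "(\<lambda>k. norm (xs (Suc k) - xs k)) \<longlonglongrightarrow> 0" by simp
  moreover have "\<forall>k. H_fun lam del f (xs (Suc k))
              \<le> H_fun lam del f (xs k) - (1 / (2 * lam * del)) * (norm (xs (Suc k) - xs k))\<^sup>2"
    using st unfolding H_def c_def by blast
  ultimately show ?thesis by blast
qed

end
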